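(* In the setting below, suppose $n\ge 3$ and let $p,q\in X$ with $S_p\cup S_q=E$ and $S_p\cap S_q=\{e_k\}$. If $|S_p|\ge 3$ and $|S_q|\ge 3$, then any strange index of $p$ or of $q$ equals $e_k$. If $|S_p|=2$, then any strange index of $q$ equals $e_k$.
   Context: Setting: $E=\{e_0,\dots,e_n\}\subset\mathbb R^n$ is the vertex set of an $n$-simplex with $e_0+\cdots+e_n=0$, and $X\subset\mathbb R^n\setminus\{0\}$ is a finite set with $E\subseteq X$, no element of $X$ a positive multiple of another, such that every $n+1$ points of $X$ are in good position. (A finite set $A$ is in conical position if $0\notin\operatorname{conv}A$ and no point of $A$ lies in the positive hull—set of nonnegative linear combinations—of the other points; it is in good position otherwise.) For $p\in X$, the support $S_p$ is the minimal subset of $E$ whose positive hull contains $p$; then $p=\sum_{e_i\in S_p}\lambda_ie_i$ uniquely with all $\lambda_i>0$. Convention: each $p\in X$ is replaced by the positive multiple for which $\min_{e_i\in S_p}\lambda_i=1$. An element $e_j\in S_p$ is a strange index of $p$ if $\lambda_j>1$ (under these hypotheses there is at most one). *)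

theory Defs
  imports "HOL-Analysis.Analysis"
begin

definition pos_hull :: "'a::real_vector set \<Rightarrow> 'a set" where
  "pos_hull A = {(\<Sum>a\<in>A. c a *\<^sub>R a) | c. \<forall>a\<in>A. 0 \<le> c a}"

definition conical_position :: "'a::real_vector set \<Rightarrow> bool" where
  "conical_position A \<longleftrightarrow> 0 \<notin> convex hull A \<and> (\<forall>a\<in>A. a \<notin> pos_hull (A - {a}))"

definition good_position :: "'a::real_vector set \<Rightarrow> bool" where
  "good_position A \<longleftrightarrow> \<not> conical_position A"

definition support :: "'a::real_vector set \<Rightarrow> 'a \<Rightarrow> 'a set" where
  "support E p = (THE S. S \<subseteq> E \<and> p \<in> pos_hull S \<and> (\<forall>T. T \<subset> S \<longrightarrow> p \<notin> pos_hull T))"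

text \<open>e is a strange index of p: writing p = sum of lambda_i e_i over the support with all
  lambda_i > 0, after rescaling so that the minimal coefficient is 1, lambda_e > 1.
  Equivalently (scale invariance) lambda_e exceeds the minimum coefficient.\<close>
definition strange_index :: "'a::real_vector set \<Rightarrow> 'a \<Rightarrow> 'a \<Rightarrow> bool" where
  "strange_index E p e \<longleftrightarrow> e \<in> support E p \<and>
     (\<exists>l. p = (\<Sum>x\<in>support E p. l x *\<^sub>R x) \<and> (\<forall>x\<in>support E p. 0 < l x) \<and>
          (\<exists>c>0. Min ((\<lambda>x. c * l x) ` support E p) = 1 \<and> c * l e > 1))"

end

theory Submission
  imports Defs
begin

lemma conical_by_rel:
  fixes A :: "'a::real_vector set"
  assumes fin: "finite A"
    and H: "\<And>d a. a \<in> A \<Longrightarrow> (\<Sum>y\<in>A. d y *\<^sub>R y) = 0 \<Longrightarrow> (\<forall>y\<in>A-{a}. 0 \<le> d y) \<Longrightarrow> (\<forall>y\<in>A. d y = 0)"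
  shows "conical_position A"
  unfolding conical_position_def
proof (intro conjI ballI)
  show "0 \<notin> convex hull A"
  proof
    assume "0 \<in> convex hull A"
    then obtain u where u: "\<forall>x\<in>A. 0 \<le> u x" "sum u A = 1" "(\<Sum>x\<in>A. u x *\<^sub>R x) = 0"
    proof -
      have "0 \<in> {y. \<exists>u. (\<forall>x\<in>A. 0 \<le> u x) \<and> sum u A = 1 \<and> (\<Sum>x\<in>A. u x *\<^sub>R x) = y}"
        using \<open>0 \<in> convex hull A\<close> convex_hull_finite[OF fin] by simp
      then show ?thesis using that by blast
    qed
    have "A \<noteq> {}" using u(2) by auto
    then obtain a where a: "a \<in> A" by blast
    have "\<forall>y\<in>A - {a}. 0 \<le> u y" using u(1) by blast
    then have "\<forall>y\<in>A. u y = 0" using H[OF a u(3)] by blast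
    then have "sum u A = 0" by simp
    then show False using u(2) by simp
  qed
next
  fix a assume a: "a \<in> A"
  show "a \<notin> pos_hull (A - {a})"
  proof
    assume "a \<in> pos_hull (A - {a})"
    then obtain c where c: "\<forall>y\<in>A - {a}. 0 \<le> c y" "a = (\<Sum>y\<in>A - {a}. c y *\<^sub>R y)"
      unfolding pos_hull_def by blast
    define d where "d = c(a := -1)"
    have "(\<Sum>y\<in>A. d y *\<^sub>R y) = d a *\<^sub>R a + (\<Sum>y\<in>A - {a}. d y *\<^sub>R y)"
      using fin a by (simp add: sum.remove)
    also have "(\<Sum>y\<in>A - {a}. d y *\<^sub>R y) = (\<Sum>y\<in>A - {a}. c y *\<^sub>R y)"
      by (rule sum.cong) (auto simp: d_def)
    finally have r: "(\<Sum>y\<in>A. d y *\<^sub>R y) = 0" using c(2) by (simp add: d_def)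
    have "\<forall>y\<in>A - {a}. 0 \<le> d y" using c(1) by (simp add: d_def)
    then have "\<forall>y\<in>A. d y = 0" using H[OF a r] by blast
    then have "d a = 0" using a by blast
    then show False by (simp add: d_def)
  qed
qed

context
  fixes E :: "'a::euclidean_space set"
  assumes fin: "finite E" and indep: "\<not> affine_dependent E" and sum0: "\<Sum>E = 0"
begin

lemma rel_const:
  assumes rel: "(\<Sum>x\<in>E. u x *\<^sub>R x) = 0" and x: "x \<in> E" and y: "y \<in> E"
  shows "u x = u y"
proof -
  define t where "t = sum u E / real (card E)"
  have cne: "card E > 0" using x fin card_gt_0_iff by blast
  have s: "sum (\<lambda>z. u z - t) E = 0"
    using cne by (simp add: sum_subtractf t_def)
  have r: "(\<Sum>z\<in>E. (u z - t) *\<^sub>R z) = 0"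
  proof -
    have "(\<Sum>z\<in>E. (u z - t) *\<^sub>R z) = (\<Sum>z\<in>E. u z *\<^sub>R z) - t *\<^sub>R (\<Sum>E)"
      by (simp add: scaleR_diff_left sum_subtractf scaleR_sum_right)
    then show ?thesis using rel sum0 by simp
  qed
  have "\<forall>v\<in>E. u v - t = 0"
    using indep affine_dependent_explicit_finite[OF fin] s r by blast
  then show ?thesis using x y by auto
qed

lemma sum_extend:
  assumes "S \<subseteq> E"
  shows "(\<Sum>z\<in>E. (if z \<in> S then f z else 0) *\<^sub>R z) = (\<Sum>z\<in>S. f z *\<^sub>R z)"
proof -
  have "(\<Sum>z\<in>E. (if z \<in> S then f z else 0) *\<^sub>R z) = (\<Sum>z\<in>E. if z \<in> S then f z *\<^sub>R z else 0)"
    by (rule sum.cong) auto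
  also have "\<dots> = (\<Sum>z\<in>S. f z *\<^sub>R z)"
    using assms fin by (simp add: sum.If_cases Int_absorb1 inf.absorb_iff2)
  finally show ?thesis .
qed

definition canon :: "('a \<Rightarrow> real) \<Rightarrow> 'a \<Rightarrow> bool" where
  "canon l p \<longleftrightarrow> (\<forall>x\<in>E. 0 \<le> l x) \<and> (\<exists>y\<in>E. l y = 0) \<and> p = (\<Sum>x\<in>E. l x *\<^sub>R x)"

lemma canon_exists:
  assumes card: "card E = DIM('a) + 1"
  shows "\<exists>l. canon l p"
proof -
  have "int (card E) = aff_dim E + 1" using aff_dim_affine_independent[OF indep] by simp
  then have "aff_dim E = int DIM('a)" using card by simp
  then have "affine hull E = UNIV" using aff_dim_eq_full by blast
  then have "p \<in> affine hull E" by simp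
  then obtain u where u: "sum u E = 1" "(\<Sum>v\<in>E. u v *\<^sub>R v) = p"
    using affine_hull_finite[OF fin] by auto
  have ne: "E \<noteq> {}" using u(1) by auto
  define m where "m = Min (u ` E)"
  have m1: "\<forall>x\<in>E. m \<le> u x" using fin m_def by auto
  have "m \<in> u ` E" using fin ne m_def by simp
  then obtain y where y: "y \<in> E" "u y = m" by auto
  have "(\<Sum>x\<in>E. (u x - m) *\<^sub>R x) = (\<Sum>x\<in>E. u x *\<^sub>R x) - m *\<^sub>R (\<Sum>E)"
    by (simp add: scaleR_diff_left sum_subtractf scaleR_sum_right)
  then have "(\<Sum>x\<in>E. (u x - m) *\<^sub>R x) = p" using u sum0 by simp
  then have "canon (\<lambda>x. u x - m) p" unfolding canon_def using m1 y by auto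
  then show ?thesis by blast
qed

lemma canon_unique:
  assumes A: "canon l p" and B: "canon l' p" and x: "x \<in> E"
  shows "l x = l' x"
proof -
  have l0: "\<forall>x\<in>E. 0 \<le> l x" "\<exists>y\<in>E. l y = 0" "p = (\<Sum>x\<in>E. l x *\<^sub>R x)"
    using A unfolding canon_def by blast+
  have l1: "\<forall>x\<in>E. 0 \<le> l' x" "\<exists>y\<in>E. l' y = 0" "p = (\<Sum>x\<in>E. l' x *\<^sub>R x)"
    using B unfolding canon_def by blast+
  obtain y where y: "y \<in> E" "l y = 0" using l0(2) by blast
  obtain y' where y': "y' \<in> E" "l' y' = 0" using l1(2) by blast
  have "(\<Sum>z\<in>E. (l z - l' z) *\<^sub>R z) = (\<Sum>z\<in>E. l z *\<^sub>R z) - (\<Sum>z\<in>E. l' z *\<^sub>R z)"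
    by (simp add: scaleR_diff_left sum_subtractf)
  also have "\<dots> = 0" using l0(3) l1(3) by simp
  finally have r0: "(\<Sum>z\<in>E. (l z - l' z) *\<^sub>R z) = 0" .
  have c: "\<And>z w. z \<in> E \<Longrightarrow> w \<in> E \<Longrightarrow> l z - l' z = l w - l' w"
    using rel_const[of "\<lambda>z. l z - l' z", OF r0] by blast
  have "l x - l' x = l y - l' y" using c x y(1) by blast
  moreover have "l x - l' x = l y' - l' y'" using c x y'(1) by blast
  moreover have "l' y \<ge> 0" using l1(1) y(1) by blast
  moreover have "l y' \<ge> 0" using l0(1) y'(1) by blast
  ultimately show ?thesis using y y' by linarith
qed

lemma posh:
  assumes "canon l p" "S \<subseteq> E"
  shows "p \<in> pos_hull S \<longleftrightarrow> {x\<in>E. 0 < l x} \<subseteq> S"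
proof
  assume "p \<in> pos_hull S"
  then obtain c where c: "\<forall>a\<in>S. 0 \<le> c a" "p = (\<Sum>a\<in>S. c a *\<^sub>R a)"
    unfolding pos_hull_def by auto
  define c' where "c' = (\<lambda>z. if z \<in> S then c z else 0)"
  have p1: "(\<Sum>z\<in>E. c' z *\<^sub>R z) = (\<Sum>a\<in>S. c a *\<^sub>R a)"
    unfolding c'_def by (rule sum_extend[OF assms(2)])
  have pl: "p = (\<Sum>x\<in>E. l x *\<^sub>R x)" using assms(1) unfolding canon_def by blast
  have "(\<Sum>z\<in>E. (l z - c' z) *\<^sub>R z) = (\<Sum>z\<in>E. l z *\<^sub>R z) - (\<Sum>z\<in>E. c' z *\<^sub>R z)"
    by (simp add: scaleR_diff_left sum_subtractf)
  also have "\<dots> = 0" using pl p1 c(2) by simp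
  finally have r0: "(\<Sum>z\<in>E. (l z - c' z) *\<^sub>R z) = 0" .
  have r: "\<And>z w. z \<in> E \<Longrightarrow> w \<in> E \<Longrightarrow> l z - c' z = l w - c' w"
    using rel_const[of "\<lambda>z. l z - c' z", OF r0] by blast
  obtain y where y: "y \<in> E" "l y = 0" using assms unfolding canon_def by auto
  show "{x\<in>E. 0 < l x} \<subseteq> S"
  proof
    fix z assume z: "z \<in> {x\<in>E. 0 < l x}"
    show "z \<in> S"
    proof (rule ccontr)
      assume "z \<notin> S"
      then have "c' z = 0" by (simp add: c'_def)
      moreover have "c' y \<ge> 0" using c(1) unfolding c'_def by simp
      moreover have "l z - c' z = l y - c' y" using r z y by blast
      ultimately show False using z y by simp
    qed
  qed
next
  assume sub: "{x\<in>E. 0 < l x} \<subseteq> S"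
  have "(\<Sum>z\<in>S. l z *\<^sub>R z) = (\<Sum>z\<in>E. l z *\<^sub>R z)"
  proof (rule sum.mono_neutral_left[OF fin assms(2)])
    show "\<forall>i\<in>E - S. l i *\<^sub>R i = 0"
    proof
      fix i assume i: "i \<in> E - S"
      then have "l i = 0" using sub assms(1) unfolding canon_def
        by (metis (mono_tags, lifting) DiffE mem_Collect_eq order_less_le subsetD)
      then show "l i *\<^sub>R i = 0" by simp
    qed
  qed
  then have "p = (\<Sum>z\<in>S. l z *\<^sub>R z)" using assms(1) unfolding canon_def by simp
  moreover have "\<forall>a\<in>S. 0 \<le> l a" using assms unfolding canon_def by auto
  ultimately show "p \<in> pos_hull S" unfolding pos_hull_def by blast
qed

lemma support_eq:
  assumes "canon l p"
  shows "support E p = {x\<in>E. 0 < l x}"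
  unfolding support_def
proof (rule the_equality)
  let ?S = "{x\<in>E. 0 < l x}"
  show "?S \<subseteq> E \<and> p \<in> pos_hull ?S \<and> (\<forall>T. T \<subset> ?S \<longrightarrow> p \<notin> pos_hull T)"
    using posh[OF assms] by auto
  fix S assume S: "S \<subseteq> E \<and> p \<in> pos_hull S \<and> (\<forall>T. T \<subset> S \<longrightarrow> p \<notin> pos_hull T)"
  then have "?S \<subseteq> S" using posh[OF assms] by blast
  moreover have "p \<in> pos_hull ?S" using posh[OF assms] by auto
  ultimately show "S = ?S" using S by blast
qed

lemma strange:
  assumes "canon l p" "strange_index E p e"
  shows "e \<in> E \<and> 0 < l e \<and> (\<exists>x\<in>E. 0 < l x \<and> l x < l e)"
proof -
  let ?S = "{x\<in>E. 0 < l x}"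
  have sup: "support E p = ?S" using support_eq[OF assms(1)] .
  from assms(2) obtain l' c where e: "e \<in> ?S" and l': "p = (\<Sum>x\<in>?S. l' x *\<^sub>R x)"
    "\<forall>x\<in>?S. 0 < l' x" and c: "c > 0" "Min ((\<lambda>x. c * l' x) ` ?S) = 1" "c * l' e > 1"
    unfolding strange_index_def sup by blast
  define l'' where "l'' = (\<lambda>z. if z \<in> ?S then l' z else 0)"
  have "p = (\<Sum>z\<in>E. l'' z *\<^sub>R z)" using sum_extend[of ?S l'] l'(1) l''_def by simp
  moreover have "\<forall>x\<in>E. 0 \<le> l'' x" using l'(2) l''_def by (simp add: less_imp_le)
  moreover have "\<exists>y\<in>E. l'' y = 0"
  proof -
    obtain y where "y \<in> E" "l y = 0" using assms(1) unfolding canon_def by blast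
    then show ?thesis unfolding l''_def by (intro bexI[of _ y]) auto
  qed
  ultimately have cl: "canon l'' p" unfolding canon_def by blast
  have eq: "l' z = l z" if "z \<in> ?S" for z
  proof -
    have "l'' z = l z" using canon_unique[OF cl assms(1)] that by blast
    then show ?thesis using that by (simp add: l''_def)
  qed
  have "finite ?S" using fin by simp
  then have "Min ((\<lambda>x. c * l' x) ` ?S) \<in> (\<lambda>x. c * l' x) ` ?S" using e by (intro Min_in) auto
  then obtain x where x: "x \<in> ?S" "c * l' x = 1" using c by auto
  then have "c * l' x < c * l' e" using c by simp
  then have "l' x < l' e" using c(1) by simp
  then have "l x < l e" using eq[of x] eq[of e] x(1) e by simp
  then show ?thesis using x(1) e by blast
qed


lemma rel_T1:
  assumes can: "canon l p" and pE: "p \<notin> E" and x: "x \<in> E"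
    and rel: "(\<Sum>y\<in>insert p (E - {x}). d y *\<^sub>R y) = 0" and z: "z \<in> E"
  shows "d p * l z + (if z = x then 0 else d z) = d p * l x"
proof -
  have pl: "p = (\<Sum>x\<in>E. l x *\<^sub>R x)" using can unfolding canon_def by blast
  have "(\<Sum>y\<in>insert p (E - {x}). d y *\<^sub>R y) = d p *\<^sub>R p + (\<Sum>y\<in>E - {x}. d y *\<^sub>R y)"
    using fin pE by (simp add: sum.insert)
  also have "(\<Sum>y\<in>E - {x}. d y *\<^sub>R y) = (\<Sum>y\<in>E. (if y \<in> E - {x} then d y else 0) *\<^sub>R y)"
    using sum_extend[of "E - {x}" d] by simp
  also have "\<dots> = (\<Sum>y\<in>E. (if y = x then 0 else d y) *\<^sub>R y)"
    by (rule sum.cong) auto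
  also have "d p *\<^sub>R p = (\<Sum>y\<in>E. (d p * l y) *\<^sub>R y)"
    unfolding pl by (simp add: scaleR_sum_right)
  finally have "(\<Sum>y\<in>E. (d p * l y) *\<^sub>R y) + (\<Sum>y\<in>E. (if y = x then 0 else d y) *\<^sub>R y) = 0"
    using rel by simp
  then have "(\<Sum>y\<in>E. (d p * l y + (if y = x then 0 else d y)) *\<^sub>R y) = 0"
    by (simp add: scaleR_add_left sum.distrib)
  from rel_const[OF this z x] show ?thesis by simp
qed

lemma rel_T2:
  assumes canp: "canon l p" and canq: "canon m q" and pE: "p \<notin> E" and qE: "q \<notin> E" and pq: "p \<noteq> q"
    and rel: "(\<Sum>y\<in>insert p (insert q (E - {a, b})). d y *\<^sub>R y) = 0" and z: "z \<in> E" and a: "a \<in> E"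
  shows "d p * l z + d q * m z + (if z \<in> {a, b} then 0 else d z) = d p * l a + d q * m a"
proof -
  have pl: "p = (\<Sum>x\<in>E. l x *\<^sub>R x)" using canp unfolding canon_def by blast
  have qm: "q = (\<Sum>x\<in>E. m x *\<^sub>R x)" using canq unfolding canon_def by blast
  have "(\<Sum>y\<in>insert p (insert q (E - {a, b})). d y *\<^sub>R y) = d p *\<^sub>R p + (d q *\<^sub>R q + (\<Sum>y\<in>E - {a, b}. d y *\<^sub>R y))"
    using fin pE qE pq by (simp add: sum.insert)
  also have "(\<Sum>y\<in>E - {a, b}. d y *\<^sub>R y) = (\<Sum>y\<in>E. (if y \<in> E - {a, b} then d y else 0) *\<^sub>R y)"
    using sum_extend[of "E - {a, b}" d] by simp
  also have "\<dots> = (\<Sum>y\<in>E. (if y \<in> {a, b} then 0 else d y) *\<^sub>R y)"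
    by (rule sum.cong) auto
  also have "d p *\<^sub>R p = (\<Sum>y\<in>E. (d p * l y) *\<^sub>R y)"
    unfolding pl by (simp add: scaleR_sum_right)
  also have "d q *\<^sub>R q = (\<Sum>y\<in>E. (d q * m y) *\<^sub>R y)"
    unfolding qm by (simp add: scaleR_sum_right)
  finally have "(\<Sum>y\<in>E. (d p * l y) *\<^sub>R y) + ((\<Sum>y\<in>E. (d q * m y) *\<^sub>R y) + (\<Sum>y\<in>E. (if y \<in> {a, b} then 0 else d y) *\<^sub>R y)) = 0"
    using rel by simp
  then have "(\<Sum>y\<in>E. (d p * l y + d q * m y + (if y \<in> {a, b} then 0 else d y)) *\<^sub>R y) = 0"
    by (simp add: scaleR_add_left sum.distrib add.assoc)
  from rel_const[OF this z a] show ?thesis by simp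
qed


lemma aux_le: "0 < (c::real) \<Longrightarrow> x * c \<le> 0 \<Longrightarrow> x \<le> 0"
  by (simp add: mult_le_0_iff)
lemma aux_ge: "0 < (c::real) \<Longrightarrow> 0 \<le> x * c \<Longrightarrow> 0 \<le> x"
  by (simp add: zero_le_mult_iff)

lemma conical_T1:
  assumes can: "canon l p" and pE: "p \<notin> E" and x: "x \<in> E" "0 < l x"
    and w: "w \<in> E" "l w = 0" and uv: "u \<in> E" "v \<in> E" "u \<noteq> v" "u \<noteq> x" "v \<noteq> x"
    "l x < l u" "l x < l v"
  shows "conical_position (insert p (E - {x}))"
proof (rule conical_by_rel)
  show "finite (insert p (E - {x}))" using fin by simp
  fix d t
  assume t: "t \<in> insert p (E - {x})" and rel: "(\<Sum>y\<in>insert p (E - {x}). d y *\<^sub>R y) = 0"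
    and nn: "\<forall>y\<in>insert p (E - {x}) - {t}. 0 \<le> d y"
  have R: "\<And>z. z \<in> E \<Longrightarrow> d p * l z + (if z = x then 0 else d z) = d p * l x"
    using rel_T1[OF can pE x(1) rel] by blast
  have dp0: "0 \<le> d p"
  proof (cases "t = p")
    case True
    have "w \<noteq> x" using w x by auto
    then have "w \<in> insert p (E - {x}) - {t}" using w pE True by auto
    then have "0 \<le> d w" using nn by blast
    moreover have "d p * l w + d w = d p * l x" using R[OF w(1)] \<open>w \<noteq> x\<close> by simp
    ultimately have "0 \<le> d p * l x" using w by simp
    then show ?thesis using aux_ge x(2) by blast
  next
    case False
    then show ?thesis using nn by blast
  qed
  obtain u' where u': "u' \<in> E" "u' \<noteq> x" "u' \<noteq> t" "l x < l u'" using uv by metis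
  have "u' \<in> insert p (E - {x}) - {t}" using u' by auto
  then have "0 \<le> d u'" using nn by blast
  moreover have "d p * l u' + d u' = d p * l x" using R[OF u'(1)] u'(2) by simp
  ultimately have "d p * (l u' - l x) \<le> 0" by (simp add: right_diff_distrib)
  moreover have "0 < l u' - l x" using u'(4) by simp
  ultimately have "d p \<le> 0" using aux_le by blast
  then have dp: "d p = 0" using dp0 by simp
  show "\<forall>y\<in>insert p (E - {x}). d y = 0"
  proof
    fix y assume y: "y \<in> insert p (E - {x})"
    show "d y = 0"
    proof (cases "y = p")
      case True then show ?thesis using dp by simp
    next
      case False
      then have "y \<in> E" "y \<noteq> x" using y by auto
      then show ?thesis using R[of y] dp by simp
    qed
  qed
qed


lemma conical_T2:
  assumes canp: "canon l p" and canq: "canon m q" and pE: "p \<notin> E" and qE: "q \<notin> E" and pq: "p \<noteq> q"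
    and a: "a \<in> E" "0 < l a" "m a = 0" and b: "b \<in> E" "l b = 0" "0 < m b" and ab: "a \<noteq> b"
    and e: "e \<in> E" "e \<noteq> a" "e \<noteq> b" "l a < l e" "m e = 0"
    and k: "k \<in> E" "k \<noteq> a" "k \<noteq> b" "k \<noteq> e" "l a \<le> l k" "0 < m k"
  shows "conical_position (insert p (insert q (E - {a, b})))"
proof (rule conical_by_rel)
  let ?A = "insert p (insert q (E - {a, b}))"
  show "finite ?A" using fin by simp
  fix d t
  assume t: "t \<in> ?A" and rel: "(\<Sum>y\<in>?A. d y *\<^sub>R y) = 0"
    and nn: "\<forall>y\<in>?A - {t}. 0 \<le> d y"
  have R: "\<And>z. z \<in> E \<Longrightarrow> d p * l z + d q * m z + (if z \<in> {a, b} then 0 else d z) = d p * l a"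
    using rel_T2[OF canp canq pE qE pq rel _ a(1)] a(3) by simp
  have Rb: "d q * m b = d p * l a" using R[OF b(1)] b(2) by simp
  have Re: "d p * l e + d e = d p * l a" using R[OF e(1)] e by simp
  have Rk: "d p * l k + d q * m k + d k = d p * l a" using R[OF k(1)] k by simp
  have eA: "e \<in> ?A" "k \<in> ?A" using e k by auto
  have "e \<noteq> p" "e \<noteq> q" "k \<noteq> p" "k \<noteq> q" using e k pE qE by auto
  have dp0: "0 \<le> d p"
  proof (cases "t = p")
    case True
    then have "0 \<le> d q" using nn pq by auto
    then have "0 \<le> d q * m b" using b by simp
    then have "0 \<le> d p * l a" using Rb by simp
    then show ?thesis using aux_ge a(2) by blast
  next
    case False
    then show ?thesis using nn by blast
  qed
  have dq0: "0 \<le> d q"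
  proof (cases "t = q")
    case True
    have "0 \<le> d p * l a" using dp0 a(2) by simp
    then have "0 \<le> d q * m b" using Rb by simp
    then show ?thesis using aux_ge b(3) by blast
  next
    case False
    then show ?thesis using nn by blast
  qed
  have both: "d p = 0 \<and> d q = 0"
  proof (cases "t = e")
    case False
    then have "0 \<le> d e" using nn eA by blast
    then have "d p * (l e - l a) \<le> 0" using Re by (simp add: right_diff_distrib)
    moreover have "0 < l e - l a" using e by simp
    ultimately have "d p \<le> 0" using aux_le by blast
    then have "d p = 0" using dp0 by simp
    then have "d q * m b = 0" using Rb by simp
    then show ?thesis using b(3) \<open>d p = 0\<close> by simp
  next
    case True
    then have "0 \<le> d k" using nn eA k(4) by blast
    moreover have "d p * (l a - l k) \<le> 0" using dp0 k(5) by (simp add: mult_nonneg_nonpos)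
    ultimately have "d q * m k \<le> 0" using Rk by (simp add: right_diff_distrib)
    then have "d q \<le> 0" using aux_le k(6) by blast
    then have "d q = 0" using dq0 by simp
    then have "d p * l a = 0" using Rb by simp
    then show ?thesis using a(2) \<open>d q = 0\<close> by simp
  qed
  show "\<forall>y\<in>?A. d y = 0"
  proof
    fix y assume y: "y \<in> ?A"
    show "d y = 0"
    proof (cases "y = p \<or> y = q")
      case True then show ?thesis using both by auto
    next
      case False
      then have "y \<in> E" "y \<notin> {a, b}" using y by auto
      then show ?thesis using R[of y] both by simp
    qed
  qed
qed


lemma inE:
  assumes card: "card E = DIM('a) + 1" and can: "canon l p" and pE: "p \<in> E"
  shows "{x\<in>E. 0 < l x} = {p}"
proof -
  define ind where "ind = (\<lambda>z::'a. if z = p then (1::real) else 0)"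
  have "card E \<ge> 2" using card by simp
  then have "E - {p} \<noteq> {}"
    by (metis Diff_empty Diff_insert0 One_nat_def card.empty card_Diff_singleton insert_Diff_single
        insert_absorb leD nat.simps(3) numeral_le_one_iff semiring_norm(69) card_insert_disjoint
        Suc_1 card_Suc_Diff1 fin le_antisym nat_le_linear not_less_eq_eq zero_less_Suc)
  then obtain y where y: "y \<in> E" "y \<noteq> p" by blast
  have "(\<Sum>z\<in>E. ind z *\<^sub>R z) = (\<Sum>z\<in>E. if z = p then z else 0)"
    by (rule sum.cong) (auto simp: ind_def)
  also have "\<dots> = p" using fin pE by simp
  finally have "canon ind p" unfolding canon_def using y by (auto simp: ind_def)
  then have "\<forall>z\<in>E. l z = ind z" using canon_unique[OF can] by blast
  then show ?thesis using pE by (auto simp: ind_def split: if_splits)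
qed

lemma card_two_elems:
  assumes "finite S" "card S \<ge> 3"
  shows "\<exists>a\<in>S. a \<noteq> u \<and> a \<noteq> v"
proof (rule ccontr)
  assume "\<not> ?thesis"
  then have "S \<subseteq> {u, v}" by blast
  then have "card S \<le> card {u, v}" by (simp add: card_mono)
  also have "\<dots> \<le> 2" by (simp add: card_insert_le_m1)
  finally show False using assms by simp
qed

lemma card_one_elem:
  assumes "finite S" "card S \<ge> 2"
  shows "\<exists>a\<in>S. a \<noteq> u"
proof (rule ccontr)
  assume "\<not> ?thesis"
  then have "S \<subseteq> {u}" by blast
  then have "card S \<le> card {u}" using card_mono[of "{u}" S] by simp
  then show False using assms by simp
qed

lemma mainL:
  assumes card: "card E = DIM('a) + 1" and X: "E \<subseteq> X" "p \<in> X" "q \<in> X"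
    and good: "\<forall>A\<subseteq>X. card A = DIM('a) + 1 \<longrightarrow> good_position A"
    and canp: "canon l p" and canq: "canon m q" and pE: "p \<notin> E" and qE: "q \<notin> E" and pq: "p \<noteq> q"
    and un: "{x\<in>E. 0 < l x} \<union> {x\<in>E. 0 < m x} = E"
    and int: "{x\<in>E. 0 < l x} \<inter> {x\<in>E. 0 < m x} = {k}"
    and c3: "card {x\<in>E. 0 < l x} \<ge> 3" and c2: "card {x\<in>E. 0 < m x} \<ge> 2"
    and e: "e \<in> E" "0 < l e" and x: "x \<in> E" "0 < l x" "l x < l e"
  shows "e = k"
proof (rule ccontr)
  assume ek: "e \<noteq> k"
  have lnn: "\<And>z. z \<in> E \<Longrightarrow> 0 \<le> l z" using canp unfolding canon_def by blast
  have mnn: "\<And>z. z \<in> E \<Longrightarrow> 0 \<le> m z" using canq unfolding canon_def by blast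
  have k: "k \<in> E" "0 < l k" "0 < m k" using int by auto
  have lm: "\<And>z. z \<in> E \<Longrightarrow> 0 < l z \<Longrightarrow> z \<noteq> k \<Longrightarrow> m z = 0"
  proof -
    fix z assume z: "z \<in> E" "0 < l z" "z \<noteq> k"
    have "\<not> 0 < m z" using int z by blast
    then show "m z = 0" using mnn[OF z(1)] by simp
  qed
  have ml: "\<And>z. z \<in> E \<Longrightarrow> 0 < m z \<Longrightarrow> z \<noteq> k \<Longrightarrow> l z = 0"
  proof -
    fix z assume z: "z \<in> E" "0 < m z" "z \<noteq> k"
    have "\<not> 0 < l z" using int z by blast
    then show "l z = 0" using lnn[OF z(1)] by simp
  qed
  obtain a where a: "a \<in> E" "0 < l a" "a \<noteq> k" "a \<noteq> e"
    using card_two_elems[OF _ c3, of k e] fin by auto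
  obtain b where b: "b \<in> E" "0 < m b" "b \<noteq> k"
    using card_one_elem[OF _ c2, of k] fin by auto
  have ma: "m a = 0" using lm a by blast
  have me: "m e = 0" using lm e ek by blast
  have lb: "l b = 0" using ml b by blast
  have noncon: "\<And>A. A \<subseteq> X \<Longrightarrow> card A = DIM('a) + 1 \<Longrightarrow> \<not> conical_position A"
    using good unfolding good_position_def by blast
  have T1: "\<And>y. y \<in> E \<Longrightarrow> conical_position (insert p (E - {y})) \<Longrightarrow> False"
  proof -
    fix y assume y: "y \<in> E" and c: "conical_position (insert p (E - {y}))"
    have "insert p (E - {y}) \<subseteq> X" using X by auto
    moreover have "card (insert p (E - {y})) = DIM('a) + 1"
      using fin pE y card by (simp add: card_Diff_singleton)
    ultimately show False using noncon c by blast
  qed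
  have ba: "b \<noteq> a" using a lb by auto
  have be: "b \<noteq> e" using e lb by auto
  show False
  proof (cases "l e \<le> l a")
    case True
    have "conical_position (insert p (E - {x}))"
      by (rule conical_T1[OF canp pE x(1) x(2) b(1) lb e(1) a(1)]) (use True x a in auto)
    then show False using T1 x(1) by blast
  next
    case False
    show False
    proof (cases "l k < l a")
      case True
      have "conical_position (insert p (E - {k}))"
        by (rule conical_T1[OF canp pE k(1) k(2) b(1) lb e(1) a(1)]) (use True False ek a in auto)
      then show False using T1 k(1) by blast
    next
      case True2: False
      have ab: "a \<noteq> b" using ba by auto
      have c: "conical_position (insert p (insert q (E - {a, b})))"
      proof -
        have f: "e \<noteq> a" "e \<noteq> b" "l a < l e" "k \<noteq> a" "k \<noteq> b" "k \<noteq> e" "l a \<le> l k"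
          using False True2 ek a b be by auto
        show ?thesis
          by (rule conical_T2[OF canp canq pE qE pq a(1) a(2) ma b(1) lb b(2) ab e(1) f(1,2,3) me k(1) f(4,5,6,7) k(3)])
      qed
      have "insert p (insert q (E - {a, b})) \<subseteq> X" using X by auto
      moreover have "card (E - {a, b}) = card E - 2"
        using fin a(1) b(1) ba by (simp add: card_Diff_subset)
      then have "card (insert p (insert q (E - {a, b}))) = DIM('a) + 1"
        using fin pE qE pq card a(1) b(1) ba by simp
      ultimately show False using noncon c by blast
    qed
  qed
qed

end


theorem proposition6p6:
  fixes E X :: "'a::euclidean_space set" and p q e\<^sub>k :: 'a
  assumes dim: "DIM('a) \<ge> 3"
    and E_fin: "finite E" and E_card: "card E = DIM('a) + 1"
    and E_simplex: "\<not> affine_dependent E" and E_sum: "\<Sum>E = 0"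
    and X_fin: "finite X" and X_nz: "0 \<notin> X" and EX: "E \<subseteq> X"
    and X_nomult: "\<forall>x\<in>X. \<forall>y\<in>X. x \<noteq> y \<longrightarrow> \<not> (\<exists>c>0. y = c *\<^sub>R x)"
    and X_good: "\<forall>A\<subseteq>X. card A = DIM('a) + 1 \<longrightarrow> good_position A"
    and pX: "p \<in> X" and qX: "q \<in> X"
    and union: "support E p \<union> support E q = E"
    and inter: "support E p \<inter> support E q = {e\<^sub>k}"
  shows "(card (support E p) \<ge> 3 \<and> card (support E q) \<ge> 3 \<longrightarrow>
            (\<forall>e. strange_index E p e \<longrightarrow> e = e\<^sub>k) \<and> (\<forall>e. strange_index E q e \<longrightarrow> e = e\<^sub>k))
       \<and> (card (support E p) = 2 \<longrightarrow> (\<forall>e. strange_index E q e \<longrightarrow> e = e\<^sub>k))"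
proof -
  note ctx = E_fin E_simplex E_sum
  obtain l where canp: "canon E l p" using canon_exists[OF ctx E_card] by blast
  obtain m where canq: "canon E m q" using canon_exists[OF ctx E_card] by blast
  have sp: "support E p = {x\<in>E. 0 < l x}" using support_eq[OF ctx canp] .
  have sq: "support E q = {x\<in>E. 0 < m x}" using support_eq[OF ctx canq] .
  have un: "{x\<in>E. 0 < l x} \<union> {x\<in>E. 0 < m x} = E" using union sp sq by simp
  have int: "{x\<in>E. 0 < l x} \<inter> {x\<in>E. 0 < m x} = {e\<^sub>k}" using inter sp sq by simp
  have un': "{x\<in>E. 0 < m x} \<union> {x\<in>E. 0 < l x} = E" using un by blast
  have int': "{x\<in>E. 0 < m x} \<inter> {x\<in>E. 0 < l x} = {e\<^sub>k}" using int by blast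
  have notE: "\<And>r n. canon E n r \<Longrightarrow> card {x\<in>E. 0 < n x} \<ge> 2 \<Longrightarrow> r \<notin> E"
  proof
    fix r n assume c: "canon E n r" "card {x\<in>E. 0 < n x} \<ge> 2" "r \<in> E"
    then have "{x\<in>E. 0 < n x} = {r}" using inE[OF ctx E_card c(1)] by blast
    then show False using c(2) by simp
  qed
  have neq: "p \<noteq> q" if "card {x\<in>E. 0 < l x} \<ge> 2"
  proof
    assume "p = q"
    then have "\<forall>z\<in>E. l z = m z" using canon_unique[OF ctx canp] canq by blast
    then have "{x\<in>E. 0 < l x} = {x\<in>E. 0 < m x}" by auto
    then have "{x\<in>E. 0 < l x} = {e\<^sub>k}" using int by blast
    then show False using that by simp
  qed
  have L: "\<And>l m p q e. canon E l p \<Longrightarrow> canon E m q \<Longrightarrow> p \<in> X \<Longrightarrow> q \<in> X \<Longrightarrow> p \<noteq> q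
      \<Longrightarrow> {x\<in>E. 0 < l x} \<union> {x\<in>E. 0 < m x} = E
      \<Longrightarrow> {x\<in>E. 0 < l x} \<inter> {x\<in>E. 0 < m x} = {e\<^sub>k}
      \<Longrightarrow> card {x\<in>E. 0 < l x} \<ge> 3 \<Longrightarrow> card {x\<in>E. 0 < m x} \<ge> 2
      \<Longrightarrow> strange_index E p e \<Longrightarrow> e = e\<^sub>k"
  proof -
    fix l m p q e
    assume a: "canon E l p" "canon E m q" "p \<in> X" "q \<in> X" "p \<noteq> q"
      "{x\<in>E. 0 < l x} \<union> {x\<in>E. 0 < m x} = E" "{x\<in>E. 0 < l x} \<inter> {x\<in>E. 0 < m x} = {e\<^sub>k}"
      "card {x\<in>E. 0 < l x} \<ge> 3" "card {x\<in>E. 0 < m x} \<ge> 2" "strange_index E p e"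
    have pE: "p \<notin> E" using notE[OF a(1)] a(8) by simp
    have qE: "q \<notin> E" using notE[OF a(2)] a(9) by simp
    obtain x where e: "e \<in> E" "0 < l e" and x: "x \<in> E" "0 < l x" "l x < l e"
      using strange[OF ctx a(1) a(10)] by blast
    show "e = e\<^sub>k"
      by (rule mainL[OF ctx E_card EX a(3) a(4) X_good a(1) a(2) pE qE a(5) a(6) a(7) a(8) a(9) e x])
  qed
  have cardsum: "card {x\<in>E. 0 < l x} + card {x\<in>E. 0 < m x} = DIM('a) + 2"
  proof -
    have "card {x\<in>E. 0 < l x} + card {x\<in>E. 0 < m x}
        = card ({x\<in>E. 0 < l x} \<union> {x\<in>E. 0 < m x}) + card ({x\<in>E. 0 < l x} \<inter> {x\<in>E. 0 < m x})"
      by (rule card_Un_Int) (use E_fin in auto)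
    then show ?thesis using un int E_card by simp
  qed
  show ?thesis
  proof (intro conjI impI allI)
    fix e assume c: "3 \<le> card (support E p) \<and> 3 \<le> card (support E q)" and s: "strange_index E p e"
    show "e = e\<^sub>k"
      by (rule L[OF canp canq pX qX neq un int _ _ s]) (use c sp sq in auto)
  next
    fix e assume c: "3 \<le> card (support E p) \<and> 3 \<le> card (support E q)" and s: "strange_index E q e"
    have "p \<noteq> q" by (rule neq) (use c sp in auto)
    then show "e = e\<^sub>k"
      by (intro L[OF canq canp qX pX _ un' int' _ _ s]) (use c sp sq in auto)
  next
    fix e assume c: "card (support E p) = 2" and s: "strange_index E q e"
    have "card {x\<in>E. 0 < m x} = DIM('a)" using cardsum c sp by simp
    then have c3: "card {x\<in>E. 0 < m x} \<ge> 3" using dim by simp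
    have "p \<noteq> q" by (rule neq) (use c sp in auto)
    then show "e = e\<^sub>k"
      by (intro L[OF canq canp qX pX _ un' int' c3 _ s]) (use c sp in auto)
  qed
qed

end
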